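(* Let $X=\mathbb{R}/\mathbb{Z}$ with its standard metric, $\mu_1=\mu_2$ Lebesgue measure, $(X,T_1,\mu_1)$ exponentially mixing for $BV$ against $L^\infty$, and $T_2(x)=x+\alpha\bmod 1$. Suppose that for some $\varepsilon>0$ and some constant $c(\alpha)>0$, \[ |q\alpha-p|\ge c(\alpha)\,\frac{(\log q)^2(\log\log q)^{1+\varepsilon}}{q^2} \] for all $p\in\mathbb{Z}$ and all sufficiently large $q\in\mathbb{N}$. Let $(r_n)_n$ be a decreasing sequence of positive numbers such that for some $0<\delta<\varepsilon$ and some $c_0>0$, $r_n\ge c_0\frac{(\log n)^2(\log\log n)^{1+\delta}}{n^2}$ for all large $n$. Then $(\mu_1\times\mu_2)(\liminf_n E_{n,r_n}^{T_1,T_2})=1$.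
   Context: $(X,T,\mu)$ is exponentially mixing for $BV$ against $L^\infty$ if there are $C,\theta>0$ such that for all $\psi$ of bounded variation, all $\varphi\in L^\infty(\mu)$ and all $n\ge0$, $\bigl|\int\psi\cdot\varphi\circ T^n\,d\mu-\int\psi\,d\mu\int\varphi\,d\mu\bigr|\le C\|\psi\|_{BV}\|\varphi\|_{L^\infty}e^{-\theta n}$. For $n\in\mathbb{N}$ and $r>0$, $E_{n,r}^{T_1,T_2}:=\{(x,y)\in X\times X : d(T_1^i x, T_2^j y)<r \text{ for some } 0\le i,j<n\}$; $E_{n,r_n}^{T_1,T_2}$ denotes this set with $r=r_n$. *)

theory Defs
  imports "HOL-Analysis.Analysis" "HOL-Probability.Probability"
begin

text \<open>The circle X = R/Z is represented by the fundamental domain [0,1).\<close>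

definition circle :: "real set" where
  "circle = {0..<1}"

definition circle_measure :: "real measure" where
  "circle_measure = restrict_space lborel circle"

definition measure_preserving_map :: "'a measure \<Rightarrow> ('a \<Rightarrow> 'a) \<Rightarrow> bool" where
  "measure_preserving_map M T \<longleftrightarrow> T \<in> measurable M M \<and> distr M M T = M"

definition circ_dist :: "real \<Rightarrow> real \<Rightarrow> real" where
  "circ_dist x y = \<bar>(x - y) - of_int (round (x - y))\<bar>"

definition rotation :: "real \<Rightarrow> real \<Rightarrow> real" where
  "rotation \<alpha> x = frac (x + \<alpha>)"

text \<open>Total variation of a function on the circle: supremum over cyclically
  ordered finite partitions 0 <= x_0 < ... < x_{n-1} < 1.\<close>
definition circ_variation :: "(real \<Rightarrow> real) \<Rightarrow> ereal" where
  "circ_variation f =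
     (SUP p \<in> {(n, x). (n::nat) \<ge> 1 \<and> (\<forall>i<n. x i \<in> circle) \<and>
                       (\<forall>i j. i < j \<and> j < n \<longrightarrow> (x::nat\<Rightarrow>real) i < x j)}.
        ereal (\<Sum>i<fst p. \<bar>f (snd p (Suc i mod fst p)) - f (snd p i)\<bar>))"

definition bounded_variation :: "(real \<Rightarrow> real) \<Rightarrow> bool" where
  "bounded_variation f \<longleftrightarrow> circ_variation f < \<infinity>"

definition bv_norm :: "(real \<Rightarrow> real) \<Rightarrow> real" where
  "bv_norm f = (SUP x \<in> circle. \<bar>f x\<bar>) + real_of_ereal (circ_variation f)"

definition Linf :: "'a measure \<Rightarrow> ('a \<Rightarrow> real) \<Rightarrow> bool" where
  "Linf M f \<longleftrightarrow> f \<in> borel_measurable M \<and> esssup M (\<lambda>x. ereal \<bar>f x\<bar>) < \<infinity>"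

definition Linf_norm :: "'a measure \<Rightarrow> ('a \<Rightarrow> real) \<Rightarrow> real" where
  "Linf_norm M f = real_of_ereal (esssup M (\<lambda>x. ereal \<bar>f x\<bar>))"

definition exp_mixing_BV_Linf :: "(real \<Rightarrow> real) \<Rightarrow> bool" where
  "exp_mixing_BV_Linf T \<longleftrightarrow>
     (\<exists>C \<theta>. C > 0 \<and> \<theta> > 0 \<and>
        (\<forall>\<psi> \<phi> (n::nat). \<psi> \<in> borel_measurable circle_measure \<and> bounded_variation \<psi>
            \<and> Linf circle_measure \<phi> \<longrightarrow>
          \<bar>(\<integral>x. \<psi> x * \<phi> ((T ^^ n) x) \<partial>circle_measure)
            - (\<integral>x. \<psi> x \<partial>circle_measure) * (\<integral>x. \<phi> x \<partial>circle_measure)\<bar>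
          \<le> C * bv_norm \<psi> * Linf_norm circle_measure \<phi> * exp (- \<theta> * real n)))"

definition E_set :: "(real \<Rightarrow> real) \<Rightarrow> (real \<Rightarrow> real) \<Rightarrow> nat \<Rightarrow> real \<Rightarrow> (real \<times> real) set" where
  "E_set T1 T2 n r = {(x, y) \<in> circle \<times> circle.
      \<exists>i<n. \<exists>j<n. circ_dist ((T1 ^^ i) x) ((T2 ^^ j) y) < r}"

end

theory Submission
  imports Defs "HOL-Real_Asymp.Real_Asymp"
begin


lemma space_cm[simp]: "space circle_measure = circle"
  by (simp add: circle_measure_def space_restrict_space)

lemma sets_cm: "A \<in> sets circle_measure \<longleftrightarrow> A \<in> sets borel \<and> A \<subseteq> circle"
  unfolding circle_measure_def circle_def
  by (subst sets_restrict_space_iff) auto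

lemma circle_borel[measurable]: "circle \<in> sets borel"
  by (simp add: circle_def)

lemma emeasure_cm: "A \<in> sets borel \<Longrightarrow> A \<subseteq> circle \<Longrightarrow> emeasure circle_measure A = emeasure lborel A"
  unfolding circle_measure_def
  by (subst emeasure_restrict_space) (auto simp: circle_def)

lemma measure_cm: "A \<in> sets borel \<Longrightarrow> A \<subseteq> circle \<Longrightarrow> measure circle_measure A = measure lborel A"
  by (simp add: measure_def emeasure_cm)

lemma prob_cm: "prob_space circle_measure"
proof
  have "emeasure circle_measure circle = emeasure lborel {0..<(1::real)}"
    by (subst emeasure_cm) (auto simp: circle_def)
  then show "emeasure circle_measure (space circle_measure) = 1" by simp
qed

lemma prob_cm2: "prob_space (circle_measure \<Otimes>\<^sub>M circle_measure)"
  by (intro prob_space_pair prob_cm)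

lemma meas_cm: "f \<in> borel_measurable borel \<Longrightarrow> f \<in> borel_measurable circle_measure"
  unfolding circle_measure_def
  by (rule measurable_restrict_space1) simp

lemma rot_eq: "\<exists>z::int. (rotation a ^^ j) y = y + real j * a + z"
proof (induction j)
  case 0 then show ?case by (auto intro: exI[of _ 0])
next
  case (Suc j)
  then obtain z::int where z: "(rotation a ^^ j) y = y + real j * a + z" by blast
  have "(rotation a ^^ Suc j) y = rotation a ((rotation a ^^ j) y)" by simp
  also have "\<dots> = y + real (Suc j) * a + real_of_int (z - floor ((rotation a ^^ j) y + a))"
    unfolding rotation_def frac_def z by (simp add: algebra_simps)
  finally show ?case by blast
qed

lemma rot_meas: "rotation a \<in> measurable circle_measure circle_measure"
proof -
  have "rotation a \<in> borel_measurable borel"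
    unfolding rotation_def frac_def by measurable
  then have "rotation a \<in> borel_measurable circle_measure" by (rule meas_cm)
  moreover have "rotation a x \<in> circle" for x
    by (simp add: rotation_def circle_def frac_lt_1)
  ultimately show ?thesis
    unfolding circle_measure_def
    by (intro measurable_restrict_space2) auto
qed

lemma funpow_meas: "f \<in> measurable M M \<Longrightarrow> (f ^^ n) \<in> measurable M M"
  by (induction n) auto

lemma circ_dist_meas[measurable]: "f \<in> borel_measurable M \<Longrightarrow> g \<in> borel_measurable M \<Longrightarrow>
  (\<lambda>z. circ_dist (f z) (g z)) \<in> borel_measurable M"
proof -
  assume [measurable]: "f \<in> borel_measurable M" "g \<in> borel_measurable M"
  have "(\<lambda>x. real_of_int \<lfloor>f x - g x + 1 / 2\<rfloor>) \<in> borel_measurable M"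
    using measurable_compose[OF _ borel_measurable_real_floor, of "\<lambda>x. f x - g x + 1/2"] by measurable
  then show ?thesis unfolding circ_dist_def round_def by measurable
qed



definition psum :: "(real\<Rightarrow>real) \<Rightarrow> nat \<Rightarrow> (nat\<Rightarrow>real) \<Rightarrow> real" where
  "psum f n x = (\<Sum>i<n. \<bar>f (x (Suc i mod n)) - f (x i)\<bar>)"

definition valid :: "nat \<Rightarrow> (nat\<Rightarrow>real) \<Rightarrow> bool" where
  "valid n x \<longleftrightarrow> n \<ge> 1 \<and> (\<forall>i<n. x i \<in> circle) \<and> (\<forall>i j. i < j \<and> j < n \<longrightarrow> x i < x j)"

lemma var_le: assumes "\<And>n x. valid n x \<Longrightarrow> psum f n x \<le> B"
  shows "circ_variation f \<le> ereal B"
  unfolding circ_variation_def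
  by (rule SUP_least) (use assms in \<open>auto simp: valid_def psum_def\<close>)

lemma var_ge0: "circ_variation f \<ge> 0"
proof -
  have "(1::nat, \<lambda>_::nat. 0::real) \<in> {(n, x). (n::nat) \<ge> 1 \<and> (\<forall>i<n. x i \<in> circle) \<and>
                       (\<forall>i j. i < j \<and> j < n \<longrightarrow> (x::nat\<Rightarrow>real) i < x j)}"
    by (auto simp: circle_def)
  then have "ereal (\<Sum>i<fst (1::nat, \<lambda>_::nat. 0::real). \<bar>f (snd (1::nat, \<lambda>_::nat. 0::real) (Suc i mod fst (1::nat, \<lambda>_::nat. 0::real))) - f (snd (1::nat, \<lambda>_::nat. 0::real) i)\<bar>) \<le> circ_variation f"
    unfolding circ_variation_def by (rule SUP_upper)
  then show ?thesis by (simp add: zero_ereal_def)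
qed

lemma psum_mono:
  assumes "valid n x" and mono: "\<And>a b. a \<le> b \<Longrightarrow> f a \<le> f b" and b: "\<And>t. 0 \<le> f t \<and> f t \<le> 1"
  shows "psum f n x \<le> 2"
proof -
  obtain k where n: "n = Suc k" using assms(1) by (cases n) (auto simp: valid_def)
  have inc: "i < k \<Longrightarrow> x i \<le> x (Suc i)" for i using assms(1) n by (auto simp: valid_def less_imp_le)
  have "psum f n x = (\<Sum>i<k. \<bar>f (x (Suc i)) - f (x i)\<bar>) + \<bar>f (x 0) - f (x k)\<bar>"
    unfolding psum_def n by simp
  also have "(\<Sum>i<k. \<bar>f (x (Suc i)) - f (x i)\<bar>) = (\<Sum>i<k. f (x (Suc i)) - f (x i))"
    by (rule sum.cong) (use mono inc in \<open>auto simp: abs_of_nonneg\<close>)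
  also have "\<dots> = f (x k) - f (x 0)" by (rule sum_lessThan_telescope)
  finally show ?thesis using b[of "x k"] b[of "x 0"] by linarith
qed

lemma psum_diff: "psum (\<lambda>t. f t - g t) n x \<le> psum f n x + psum g n x"
  unfolding psum_def sum.distrib[symmetric] by (rule sum_mono) linarith

lemma psum_max: "psum (\<lambda>t. max (f t) (g t)) n x \<le> psum f n x + psum g n x"
  unfolding psum_def sum.distrib[symmetric] by (rule sum_mono) (simp add: max_def, linarith)

lemma psum_one_minus: "psum (\<lambda>t. 1 - f t) n x = psum f n x"
  unfolding psum_def by (rule sum.cong) auto

lemma psum_interval: assumes "valid n x" "u < v"
  shows "psum (indicator {u<..<v}) n x \<le> 4"
proof -
  have eq: "indicator {u<..<v} = (\<lambda>t. (if t > u then 1 else 0) - (if t \<ge> v then 1 else 0 :: real))"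
    using assms(2) by (auto simp: indicator_def fun_eq_iff)
  have "psum (indicator {u<..<v}) n x \<le> psum (\<lambda>t. if t > u then 1 else 0) n x + psum (\<lambda>t. if t \<ge> v then 1 else 0) n x"
    unfolding eq by (rule psum_diff)
  also have "\<dots> \<le> 2 + 2"
    by (intro add_mono psum_mono[OF assms(1)]) auto
  finally show ?thesis by simp
qed

lemma psum_union: assumes "valid n x" "\<And>j. j < m \<Longrightarrow> u j < v j"
  shows "psum (indicator (\<Union>j<m. {u j<..<v j})) n x \<le> 4 * real m"
  using assms(2)
proof (induction m)
  case 0 then show ?case by (simp add: psum_def)
next
  case (Suc m)
  have eq: "indicator (\<Union>j<Suc m. {u j<..<v j}) = (\<lambda>t. max (indicator (\<Union>j<m. {u j<..<v j}) t) (indicator {u m<..<v m} t) :: real)"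
    by (auto simp: indicator_def fun_eq_iff lessThan_Suc)
  have "psum (indicator (\<Union>j<Suc m. {u j<..<v j})) n x \<le> psum (indicator (\<Union>j<m. {u j<..<v j})) n x + psum (indicator {u m<..<v m}) n x"
    unfolding eq by (rule psum_max)
  also have "\<dots> \<le> 4 * real m + 4"
    using Suc by (intro add_mono psum_interval[OF assms(1)]) auto
  finally show ?case by simp
qed

lemma bv_union:
  assumes "\<And>j. j < m \<Longrightarrow> u j < v j"
  defines "\<psi> \<equiv> (\<lambda>t. 1 - indicator (\<Union>j<m. {u j<..<v j}) t :: real)"
  shows "bounded_variation \<psi>" "0 \<le> bv_norm \<psi>" "bv_norm \<psi> \<le> 1 + 4 * real m"
proof -
  have V: "circ_variation \<psi> \<le> ereal (4 * real m)"
    unfolding \<psi>_def by (rule var_le) (simp add: psum_one_minus psum_union assms)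
  have V0: "0 \<le> circ_variation \<psi>" by (rule var_ge0)
  obtain w where w: "circ_variation \<psi> = ereal w" "0 \<le> w" "w \<le> 4 * real m"
    using V V0 by (cases "circ_variation \<psi>") auto
  show "bounded_variation \<psi>" unfolding bounded_variation_def w by simp
  have bdd: "bdd_above ((\<lambda>x. \<bar>\<psi> x\<bar>) ` circle)"
    by (rule bdd_aboveI[of _ 1]) (auto simp: \<psi>_def indicator_def)
  have ne: "circle \<noteq> {}" by (auto simp: circle_def intro: exI[of _ 0])
  have S1: "(SUP x\<in>circle. \<bar>\<psi> x\<bar>) \<le> 1"
    by (rule cSUP_least[OF ne]) (auto simp: \<psi>_def indicator_def)
  have z: "(0::real) \<in> circle" by (simp add: circle_def)
  have "\<bar>\<psi> 0\<bar> \<le> (SUP x\<in>circle. \<bar>\<psi> x\<bar>)"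
    by (rule cSUP_upper[OF z bdd])
  then have S0: "0 \<le> (SUP x\<in>circle. \<bar>\<psi> x\<bar>)" by linarith
  show "0 \<le> bv_norm \<psi>" "bv_norm \<psi> \<le> 1 + 4 * real m"
    unfolding bv_norm_def w using S0 S1 w by simp_all
qed



lemma integrable_cm: "f \<in> borel_measurable circle_measure \<Longrightarrow> (\<And>x. \<bar>f x\<bar> \<le> (B::real)) \<Longrightarrow> integrable circle_measure f"
  using prob_space.finite_measure[OF prob_cm]
  by (intro finite_measure.integrable_const_bound[where B=B]) auto

lemma Linf_bounded:
  assumes "f \<in> borel_measurable circle_measure" "\<And>x. \<bar>f x\<bar> \<le> 1"
  shows "Linf circle_measure f" "Linf_norm circle_measure f \<le> 1"
proof -
  have "esssup circle_measure (\<lambda>x. ereal \<bar>f x\<bar>) \<le> 1"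
    by (rule esssup_I) (use assms in auto)
  then have "esssup circle_measure (\<lambda>x. ereal \<bar>f x\<bar>) < \<infinity>"
    by (rule le_less_trans) simp
  then show "Linf circle_measure f" using assms(1) unfolding Linf_def by simp
  show "Linf_norm circle_measure f \<le> 1" unfolding Linf_norm_def
    using \<open>esssup circle_measure (\<lambda>x. ereal \<bar>f x\<bar>) \<le> 1\<close>
    by (cases "esssup circle_measure (\<lambda>x. ereal \<bar>f x\<bar>)") auto
qed

lemma iterate_bound:
  fixes T :: "real \<Rightarrow> real" and \<psi> :: "real \<Rightarrow> real"
  assumes Tm: "T \<in> measurable circle_measure circle_measure"
    and \<psi>m: "\<psi> \<in> borel_measurable circle_measure"
    and \<psi>b: "\<And>t. 0 \<le> \<psi> t \<and> \<psi> t \<le> 1"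
    and bv: "0 \<le> bv_norm \<psi>" "bv_norm \<psi> \<le> B" and Cpos: "C > 0"
    and mix: "\<And>\<phi>. Linf circle_measure \<phi> \<Longrightarrow>
       \<bar>(\<integral>x. \<psi> x * \<phi> ((T ^^ g) x) \<partial>circle_measure)
            - (\<integral>x. \<psi> x \<partial>circle_measure) * (\<integral>x. \<phi> x \<partial>circle_measure)\<bar>
          \<le> C * bv_norm \<psi> * Linf_norm circle_measure \<phi> * exp (- \<theta> * real g)"
  shows "(\<integral>x. (\<Prod>l<L. \<psi> ((T ^^ (l*g)) x)) \<partial>circle_measure)
      \<le> (\<integral>x. \<psi> x \<partial>circle_measure) ^ L + real L * (C * B * exp (- \<theta> * real g))"
proof (induction L)
  case 0
  interpret prob_space circle_measure by (rule prob_cm)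
  show ?case by (simp add: prob_space)
next
  case (Suc L)
  interpret prob_space circle_measure by (rule prob_cm)
  define a where "a = (\<integral>x. \<psi> x \<partial>circle_measure)"
  define E where "E = C * B * exp (- \<theta> * real g)"
  define \<Phi> where "\<Phi> = (\<lambda>z. \<Prod>l<L. \<psi> ((T ^^ (l*g)) z))"
  have \<Phi>m: "\<Phi> \<in> borel_measurable circle_measure"
    unfolding \<Phi>_def
    by (intro borel_measurable_prod measurable_compose[OF funpow_meas[OF Tm] \<psi>m])
  have \<Phi>b: "\<bar>\<Phi> z\<bar> \<le> 1" for z
    unfolding \<Phi>_def abs_prod by (rule prod_le_1) (use \<psi>b in auto)
  note LI = Linf_bounded[OF \<Phi>m \<Phi>b]
  have a0: "0 \<le> a" unfolding a_def by (rule integral_nonneg_AE) (use \<psi>b in auto)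
  have a1: "a \<le> 1" unfolding a_def
    by (rule integral_le_const) (use \<psi>b integrable_cm[OF \<psi>m, of 1] in auto)
  have E0: "0 \<le> E" unfolding E_def using Cpos bv by auto
  have eq: "(\<integral>x. \<psi> x * \<Phi> ((T ^^ g) x) \<partial>circle_measure) = (\<integral>x. (\<Prod>l<Suc L. \<psi> ((T ^^ (l*g)) x)) \<partial>circle_measure)"
  proof (rule Bochner_Integration.integral_cong[OF refl])
    fix x
    have "(\<Prod>l<Suc L. \<psi> ((T ^^ (l*g)) x)) = \<psi> ((T ^^ (0*g)) x) * (\<Prod>l<L. \<psi> ((T ^^ (Suc l*g)) x))"
      by (rule prod.lessThan_Suc_shift)
    also have "(\<Prod>l<L. \<psi> ((T ^^ (Suc l*g)) x)) = \<Phi> ((T ^^ g) x)"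
      unfolding \<Phi>_def
    proof (rule prod.cong[OF refl])
      fix l
      have "Suc l * g = l*g + g" by simp
      then show "\<psi> ((T ^^ (Suc l*g)) x) = \<psi> ((T ^^ (l*g)) ((T ^^ g) x))"
        by (simp only: funpow_add comp_apply)
    qed
    finally show "\<psi> x * \<Phi> ((T ^^ g) x) = (\<Prod>l<Suc L. \<psi> ((T ^^ (l*g)) x))" by simp
  qed
  have "C * bv_norm \<psi> * Linf_norm circle_measure \<Phi> * exp (- \<theta> * real g) \<le> C * bv_norm \<psi> * 1 * exp (- \<theta> * real g)"
    using LI(2) Cpos bv by (intro mult_right_mono mult_left_mono) auto
  also have "\<dots> \<le> E" unfolding E_def using Cpos bv by (intro mult_right_mono mult_left_mono) auto
  finally have "\<bar>(\<integral>x. (\<Prod>l<Suc L. \<psi> ((T ^^ (l*g)) x)) \<partial>circle_measure) - a * (\<integral>x. \<Phi> x \<partial>circle_measure)\<bar> \<le> E"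
    using mix[OF LI(1)] unfolding eq a_def by linarith
  moreover have "a * (\<integral>x. \<Phi> x \<partial>circle_measure) \<le> a * (a ^ L + real L * E)"
    using Suc a0 unfolding \<Phi>_def E_def a_def by (intro mult_left_mono) auto
  moreover have "a * (real L * E) \<le> real L * E"
    using a0 a1 E0 by (intro mult_left_le_one_le) auto
  ultimately show ?case unfolding a_def[symmetric] E_def[symmetric]
    by (simp add: algebra_simps)
qed



lemma nearest: "\<bar>(x::real) - of_int (round x)\<bar> \<le> \<bar>x - of_int (p::int)\<bar>"
proof (rule ccontr)
  assume "\<not> ?thesis"
  then have a: "\<bar>x - of_int p\<bar> < \<bar>x - of_int (round x)\<bar>" by simp
  have "\<bar>of_int (round x) - x\<bar> \<le> 1/2" by (rule of_int_round_abs_le)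
  with a have "\<bar>of_int p - of_int (round x)\<bar> < (1::real)" by linarith
  then have "\<bar>p - round x\<bar> < 1" by linarith
  then have "p = round x" by linarith
  with a show False by simp
qed

lemma ln_big: assumes "(27::real) \<le> x" shows "exp 1 \<le> ln x" "1 \<le> ln (ln x)"
proof -
  have "exp (exp 1) \<le> exp (3::real)" using exp_le by simp
  also have "exp (3::real) = exp 1 ^ 3" by (simp add: exp_of_nat_mult[symmetric])
  also have "\<dots> \<le> 3 ^ 3" by (intro power_mono exp_le) auto
  finally have "exp (exp 1) \<le> x" using assms by simp
  then show e: "exp 1 \<le> ln x" using assms by (subst ln_ge_iff) auto
  then show "1 \<le> ln (ln x)" by (subst ln_ge_iff) (auto intro: less_le_trans[OF exp_gt_zero])
qed

lemma gap:
  fixes \<alpha> c\<alpha> \<epsilon> :: real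
  assumes c\<alpha>: "c\<alpha> > 0" and eps: "\<epsilon> > 0"
    and dioph: "\<exists>Q. \<forall>q::nat \<ge> Q. \<forall>p::int.
        \<bar>real q * \<alpha> - real_of_int p\<bar>
          \<ge> c\<alpha> * (ln (real q))\<^sup>2 * (ln (ln (real q))) powr (1 + \<epsilon>) / (real q)\<^sup>2"
  shows "\<exists>k0. \<forall>k\<ge>k0. \<forall>q::nat. 0 < q \<and> q < 2^k \<longrightarrow>
           (\<forall>p::int. c\<alpha> * (real k * ln 2)\<^sup>2 / 4^k \<le> \<bar>real q * \<alpha> - real_of_int p\<bar>)"
proof -
  obtain Q where Q: "\<forall>q::nat \<ge> Q. \<forall>p::int.
        \<bar>real q * \<alpha> - real_of_int p\<bar>
          \<ge> c\<alpha> * (ln (real q))\<^sup>2 * (ln (ln (real q))) powr (1 + \<epsilon>) / (real q)\<^sup>2"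
    using dioph by blast
  define Q' where "Q' = max Q 27"
  have big: "\<And>q p. q \<ge> Q' \<Longrightarrow> c\<alpha> * (ln (real q) / real q)\<^sup>2 \<le> \<bar>real q * \<alpha> - real_of_int p\<bar>"
  proof -
    fix q :: nat and p :: int assume q: "q \<ge> Q'"
    then have q27: "27 \<le> real q" unfolding Q'_def by simp
    note lb = ln_big[OF q27]
    have "1 \<le> (ln (ln (real q))) powr (1 + \<epsilon>)"
      using lb eps by (intro ge_one_powr_ge_zero) auto
    then have "c\<alpha> * (ln (real q))\<^sup>2 * 1 / (real q)\<^sup>2 \<le> c\<alpha> * (ln (real q))\<^sup>2 * (ln (ln (real q))) powr (1 + \<epsilon>) / (real q)\<^sup>2"
      using c\<alpha> by (intro divide_right_mono mult_left_mono) auto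
    also have "\<dots> \<le> \<bar>real q * \<alpha> - real_of_int p\<bar>" using Q q unfolding Q'_def by auto
    finally show "c\<alpha> * (ln (real q) / real q)\<^sup>2 \<le> \<bar>real q * \<alpha> - real_of_int p\<bar>"
      by (simp add: power_divide)
  qed
  have pos: "0 < \<bar>real q * \<alpha> - of_int (round (real q * \<alpha>))\<bar>" if q: "1 \<le> q" for q :: nat
  proof (rule ccontr)
    assume "\<not> ?thesis"
    then have e: "real q * \<alpha> = of_int (round (real q * \<alpha>))" by simp
    define q' where "q' = q * Q'"
    have "Q' \<le> q'" unfolding q'_def using q by simp
    have q27: "27 \<le> real q'" using \<open>Q' \<le> q'\<close> unfolding Q'_def by linarith
    have "real q' * \<alpha> = real Q' * (real q * \<alpha>)" by (simp add: q'_def)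
    also have "\<dots> = real Q' * of_int (round (real q * \<alpha>))"
      by (rule arg_cong[of _ _ "\<lambda>t. real Q' * t", OF e])
    finally have "real q' * \<alpha> - real_of_int (int Q' * round (real q * \<alpha>)) = 0" by simp
    with big[OF \<open>Q' \<le> q'\<close>, of "int Q' * round (real q * \<alpha>)"]
    have "c\<alpha> * (ln (real q') / real q')\<^sup>2 \<le> 0" by simp
    moreover have "0 < c\<alpha> * (ln (real q') / real q')\<^sup>2"
      using ln_big(1)[OF q27] q27 c\<alpha> by (intro mult_pos_pos) (auto intro: less_le_trans[OF exp_gt_zero])
    ultimately show False by simp
  qed
  have lim: "(\<lambda>k::nat. c\<alpha> * (real k * ln 2)\<^sup>2 / 4^k) \<longlonglongrightarrow> 0" by real_asymp
  have ev1: "\<forall>\<^sub>F k in sequentially. \<forall>q\<in>{1..<Q'}. c\<alpha> * (real k * ln 2)\<^sup>2 / 4^k < \<bar>real q * \<alpha> - of_int (round (real q * \<alpha>))\<bar>"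
  proof (rule eventually_ball_finite)
    show "finite {1..<Q'}" by simp
    show "\<forall>q\<in>{1..<Q'}. \<forall>\<^sub>F k in sequentially. c\<alpha> * (real k * ln 2)\<^sup>2 / 4^k < \<bar>real q * \<alpha> - of_int (round (real q * \<alpha>))\<bar>"
      using pos by (auto intro: order_tendstoD(2)[OF lim])
  qed
  then obtain k0 where k0: "\<And>k. k \<ge> k0 \<Longrightarrow> \<forall>q\<in>{1..<Q'}. c\<alpha> * (real k * ln 2)\<^sup>2 / 4^k < \<bar>real q * \<alpha> - of_int (round (real q * \<alpha>))\<bar>"
    unfolding eventually_sequentially by blast
  show ?thesis
  proof (intro exI[of _ k0] allI impI)
    fix k q p assume k: "k \<ge> k0" and q: "0 < q \<and> q < (2::nat)^k"
    show "c\<alpha> * (real k * ln 2)\<^sup>2 / 4^k \<le> \<bar>real q * \<alpha> - real_of_int p\<bar>"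
    proof (cases "q < Q'")
      case True
      then have "c\<alpha> * (real k * ln 2)\<^sup>2 / 4^k < \<bar>real q * \<alpha> - of_int (round (real q * \<alpha>))\<bar>"
        using k0[OF k] q by auto
      then show ?thesis using nearest[of "real q * \<alpha>" p] by linarith
    next
      case False
      then have qQ: "q \<ge> Q'" by simp
      have q27: "27 \<le> real q" using qQ unfolding Q'_def by linarith
      have "real q \<le> real ((2::nat)^k)" using q by linarith
      then have "ln (real ((2::nat)^k)) / real ((2::nat)^k) \<le> ln (real q) / real q"
        using ln_x_over_x_mono[of "real q" "real ((2::nat)^k)"] ln_big(1)[OF q27] exp_le q27 by linarith
      moreover have "0 \<le> ln (real ((2::nat)^k)) / real ((2::nat)^k)" using q by simp
      ultimately have "(ln (real ((2::nat)^k)) / real ((2::nat)^k))\<^sup>2 \<le> (ln (real q) / real q)\<^sup>2"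
        by (intro power_mono) auto
      moreover have "(ln (real ((2::nat)^k)) / real ((2::nat)^k))\<^sup>2 = (real k * ln 2)\<^sup>2 / 4^k"
      proof -
        have l: "ln (real ((2::nat)^k)) = real k * ln 2" by (simp add: ln_realpow)
        have q: "(real ((2::nat)^k))\<^sup>2 = 4^k" by (simp add: power2_eq_square power_mult_distrib[symmetric])
        show ?thesis by (simp only: power_divide l q)
      qed
      ultimately have "c\<alpha> * ((real k * ln 2)\<^sup>2 / 4^k) \<le> c\<alpha> * (ln (real q) / real q)\<^sup>2"
        using c\<alpha> by (intro mult_left_mono) auto
      then show ?thesis using big[OF qQ, of p] by simp
    qed
  qed
qed



lemma circ_dist_le: "circ_dist a b \<le> \<bar>a - b\<bar>"
proof -
  have "\<bar>(a - b) - of_int (round (a - b))\<bar> \<le> \<bar>(a - b) - of_int (0::int)\<bar>"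
  proof (rule ccontr)
    assume "\<not> ?thesis"
    then have a: "\<bar>(a-b) - of_int 0\<bar> < \<bar>(a-b) - of_int (round (a-b))\<bar>" by simp
    have "\<bar>of_int (round (a-b)) - (a-b)\<bar> \<le> (1/2::real)" by (rule of_int_round_abs_le)
    with a have "\<bar>of_int 0 - of_int (round (a-b))\<bar> < (1::real)" by linarith
    then have "round (a-b) = 0" by linarith
    with a show False by simp
  qed
  then show ?thesis by (simp add: circ_dist_def)
qed

lemma rot_in: "y \<in> circle \<Longrightarrow> (rotation a ^^ j) y \<in> circle"
  by (cases j) (auto simp: rotation_def circle_def frac_lt_1)

lemma slice_bound:
  fixes T :: "real \<Rightarrow> real"
  assumes Tm: "T \<in> measurable circle_measure circle_measure"
    and Cpos: "C > 0"
    and mix: "\<forall>\<psi> \<phi> (n::nat). \<psi> \<in> borel_measurable circle_measure \<and> bounded_variation \<psi>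
            \<and> Linf circle_measure \<phi> \<longrightarrow>
          \<bar>(\<integral>x. \<psi> x * \<phi> ((T ^^ n) x) \<partial>circle_measure)
            - (\<integral>x. \<psi> x \<partial>circle_measure) * (\<integral>x. \<phi> x \<partial>circle_measure)\<bar>
          \<le> C * bv_norm \<psi> * Linf_norm circle_measure \<phi> * exp (- \<theta> * real n)"
    and y: "y \<in> circle" and s: "0 < s" "s < 1/4" and m: "1 \<le> m"
    and sep: "\<And>j j'. j < m \<Longrightarrow> j' < m \<Longrightarrow> j \<noteq> j' \<Longrightarrow>
               2 * s \<le> circ_dist ((rotation \<alpha> ^^ j) y) ((rotation \<alpha> ^^ j') y)"
    and Lg: "L * g \<le> m"
  shows "emeasure circle_measure {x \<in> circle. (x, y) \<notin> E_set T (rotation \<alpha>) m s}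
          \<le> ennreal (exp (- (real m * s) * real L) + real L * (C * (1 + 4 * real m) * exp (- \<theta> * real g)))"
proof -
  interpret prob_space circle_measure by (rule prob_cm)
  define c where "c j = (rotation \<alpha> ^^ j) y" for j
  define lo where "lo j = (if c j + s < 1 then c j else c j - s)" for j
  define I where "I j = {lo j<..<lo j + s}" for j
  define A where "A = (\<Union>j<m. {lo j<..<lo j + s})"
  define \<psi> where "\<psi> = (\<lambda>t. 1 - indicator (\<Union>j<m. {lo j<..<lo j + s}) t :: real)"
  define B where "B = {x \<in> circle. \<forall>l<L. (T ^^ (l*g)) x \<notin> A}"
  have c_in: "c j \<in> circle" for j unfolding c_def by (rule rot_in[OF y])
  have I_sub: "I j \<subseteq> circle" for j
    using c_in[of j] s unfolding I_def lo_def circle_def by auto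
  have A_sub: "A \<subseteq> circle" unfolding A_def using I_sub unfolding I_def by blast
  have I_near: "x \<in> I j \<Longrightarrow> \<bar>x - c j\<bar> < s" for x j
    unfolding I_def lo_def by (auto split: if_splits)
  have disj: "disjoint_family_on I {..<m}"
  unfolding disjoint_family_on_def proof (intro ballI impI)
    fix j j' assume jj: "j \<in> {..<m}" "j' \<in> {..<m}" "j \<noteq> j'"
    show "I j \<inter> I j' = {}"
    proof (rule ccontr)
      assume "I j \<inter> I j' \<noteq> {}"
      then obtain x where "x \<in> I j" "x \<in> I j'" by blast
      then have "\<bar>x - c j\<bar> < s" "\<bar>x - c j'\<bar> < s" using I_near by auto
      then have "\<bar>c j - c j'\<bar> < 2 * s" by linarith
      then have "circ_dist (c j) (c j') < 2 * s" using circ_dist_le[of "c j" "c j'"] by linarith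
      with sep[of j j'] jj show False unfolding c_def by auto
    qed
  qed
  have A_borel: "A \<in> sets borel" unfolding A_def by auto
  have A_sets: "A \<in> sets circle_measure" using A_borel A_sub by (simp add: sets_cm)
  have mA: "measure circle_measure A = real m * s"
  proof -
    have "measure circle_measure A = measure lborel A" by (rule measure_cm[OF A_borel A_sub])
    also have "\<dots> = (\<Sum>j<m. measure lborel (I j))"
      unfolding A_def
    proof (fold I_def, rule measure_finite_Union)
      show "disjoint_family_on I {..<m}" by (rule disj)
      show "\<And>i. i \<in> {..<m} \<Longrightarrow> emeasure lborel (I i) \<noteq> \<infinity>"
        using s by (simp add: I_def emeasure_lborel_Ioo)
    qed (auto simp: I_def)
    also have "\<dots> = real m * s" using s by (simp add: I_def)
    finally show ?thesis .
  qed
  have \<psi>m: "\<psi> \<in> borel_measurable circle_measure"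
    unfolding \<psi>_def by (intro meas_cm) (use A_borel[unfolded A_def] in measurable)
  have \<psi>b: "0 \<le> \<psi> t \<and> \<psi> t \<le> 1" for t by (simp add: \<psi>_def indicator_def)
  have lohi: "\<And>j. j < m \<Longrightarrow> lo j < lo j + s" using s by simp
  note bv = bv_union[of m lo "\<lambda>j. lo j + s", OF lohi, folded \<psi>_def]
  have int\<psi>: "(\<integral>x. \<psi> x \<partial>circle_measure) = 1 - real m * s"
  proof -
    have "(\<integral>x. \<psi> x \<partial>circle_measure) = (\<integral>x. 1 \<partial>circle_measure) - (\<integral>x. indicator A x \<partial>circle_measure)"
      unfolding \<psi>_def A_def[symmetric]
      by (rule Bochner_Integration.integral_diff) (use A_sets in \<open>auto intro!: integrable_real_indicator simp: emeasure_eq_measure\<close>)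
    also have "\<dots> = 1 - measure circle_measure A"
      using A_sub prob_space by (simp add: Int_absorb2)
    finally show ?thesis using mA by simp
  qed
  have mix\<psi>: "\<And>\<phi>. Linf circle_measure \<phi> \<Longrightarrow>
       \<bar>(\<integral>x. \<psi> x * \<phi> ((T ^^ g) x) \<partial>circle_measure)
            - (\<integral>x. \<psi> x \<partial>circle_measure) * (\<integral>x. \<phi> x \<partial>circle_measure)\<bar>
          \<le> C * bv_norm \<psi> * Linf_norm circle_measure \<phi> * exp (- \<theta> * real g)"
    using mix \<psi>m bv(1) by blast
  have IB: "(\<integral>x. (\<Prod>l<L. \<psi> ((T ^^ (l*g)) x)) \<partial>circle_measure)
      \<le> (1 - real m * s) ^ L + real L * (C * (1 + 4 * real m) * exp (- \<theta> * real g))"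
    using iterate_bound[OF Tm \<psi>m \<psi>b bv(2) bv(3) Cpos mix\<psi>, of L] int\<psi> by simp
  have B_sets: "B \<in> sets circle_measure"
  proof -
    note [measurable] = funpow_meas[OF Tm] A_sets
    have "{x \<in> space circle_measure. \<forall>l<L. (T ^^ (l*g)) x \<notin> A} \<in> sets circle_measure"
      by measurable
    then show ?thesis by (simp only: B_def space_cm)
  qed
  have mB: "measure circle_measure B = (\<integral>x. (\<Prod>l<L. \<psi> ((T ^^ (l*g)) x)) \<partial>circle_measure)"
  proof -
    have "measure circle_measure B = (\<integral>x. indicator B x \<partial>circle_measure)"
    proof -
      have "B \<inter> circle = B" unfolding B_def by blast
      then show ?thesis by simp
    qed
    also have "\<dots> = (\<integral>x. (\<Prod>l<L. \<psi> ((T ^^ (l*g)) x)) \<partial>circle_measure)"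
    proof (rule Bochner_Integration.integral_cong[OF refl])
      fix x assume x: "x \<in> space circle_measure"
      show "indicator B x = (\<Prod>l<L. \<psi> ((T ^^ (l*g)) x))"
      proof (cases "\<forall>l<L. (T ^^ (l*g)) x \<notin> A")
        case True then show ?thesis using x by (simp add: B_def \<psi>_def A_def[symmetric])
      next
        case False
        then obtain l where l: "l < L" "(T ^^ (l*g)) x \<in> A" by blast
        have "\<psi> ((T ^^ (l*g)) x) = 0" using l(2) by (simp add: \<psi>_def A_def[symmetric])
        then have "(\<Prod>l<L. \<psi> ((T ^^ (l*g)) x)) = 0" using l(1) by (intro prod_zero) auto
        moreover have "x \<notin> B" using l unfolding B_def by blast
        ultimately show ?thesis by simp
      qed
    qed
    finally show ?thesis .
  qed
  have sub: "{x \<in> circle. (x, y) \<notin> E_set T (rotation \<alpha>) m s} \<subseteq> B"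
  proof
    fix x assume x: "x \<in> {x \<in> circle. (x, y) \<notin> E_set T (rotation \<alpha>) m s}"
    have "(T ^^ (l*g)) x \<notin> A" if l: "l < L" for l
    proof
      assume "(T ^^ (l*g)) x \<in> A"
      then obtain j where j: "j < m" "(T ^^ (l*g)) x \<in> I j" unfolding A_def I_def by blast
      have "l * g < m"
      proof (cases "g = 0")
        case True then show ?thesis using m by simp
      next
        case False
        then have "l * g < L * g" using l by simp
        then show ?thesis using Lg by linarith
      qed
      moreover have "circ_dist ((T ^^ (l*g)) x) (c j) < s"
        using circ_dist_le I_near[OF j(2)] by (rule le_less_trans)
      ultimately have "(x, y) \<in> E_set T (rotation \<alpha>) m s"
        using x y j(1) c_in[of j] unfolding E_set_def c_def by blast
      with x show False by simp
    qed
    then show "x \<in> B" using x unfolding B_def by blast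
  qed
  have ms1: "real m * s \<le> 1" using mA prob_le_1[of A] by simp
  have pw: "(1 - real m * s) ^ L \<le> exp (- (real m * s) * real L)"
  proof -
    have "(1 - real m * s) ^ L \<le> exp (- (real m * s)) ^ L"
      using ms1 exp_ge_add_one_self[of "- (real m * s)"] by (intro power_mono) auto
    also have "\<dots> = exp (- (real m * s) * real L)" by (simp add: exp_of_nat_mult[symmetric] mult.commute)
    finally show ?thesis .
  qed
  have "emeasure circle_measure {x \<in> circle. (x, y) \<notin> E_set T (rotation \<alpha>) m s} \<le> emeasure circle_measure B"
    by (rule emeasure_mono[OF sub B_sets])
  also have "\<dots> = ennreal (measure circle_measure B)" by (rule emeasure_eq_measure)
  also have "\<dots> \<le> ennreal (exp (- (real m * s) * real L) + real L * (C * (1 + 4 * real m) * exp (- \<theta> * real g)))"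
    using mB IB pw by (intro ennreal_leI) linarith
  finally show ?thesis .
qed



lemma circ_rot:
  assumes "j < m" "j' < m" "j \<noteq> j'"
  shows "\<exists>q::nat. \<exists>p::int. 0 < q \<and> q < m \<and>
     circ_dist ((rotation a ^^ j) y) ((rotation a ^^ j') y) = \<bar>real q * a - of_int p\<bar>"
proof -
  obtain z1 :: int where z1: "(rotation a ^^ j) y = y + real j * a + z1" using rot_eq by blast
  obtain z2 :: int where z2: "(rotation a ^^ j') y = y + real j' * a + z2" using rot_eq by blast
  define d where "d = (rotation a ^^ j) y - (rotation a ^^ j') y"
  have cd: "circ_dist ((rotation a ^^ j) y) ((rotation a ^^ j') y) = \<bar>d - of_int (round d)\<bar>"
    unfolding circ_dist_def d_def ..
  show ?thesis
  proof (cases "j' < j")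
    case True
    have "d - of_int (round d) = real (j - j') * a - of_int (round d - (z1 - z2))"
      unfolding d_def z1 z2 using True by (simp add: of_nat_diff algebra_simps)
    then show ?thesis using cd True assms by (intro exI[of _ "j - j'"] exI[of _ "round d - (z1 - z2)"]) auto
  next
    case False
    then have Tr: "j < j'" using assms by simp
    have "d - of_int (round d) = - (real (j' - j) * a - of_int ((z1 - z2) - round d))"
      unfolding d_def z1 z2 using Tr by (simp add: of_nat_diff algebra_simps)
    then show ?thesis using cd Tr assms
      by (intro exI[of _ "j' - j"] exI[of _ "(z1 - z2) - round d"]) (auto simp del: of_int_diff)
  qed
qed

lemma cm_to_borel: "f \<in> measurable circle_measure circle_measure \<Longrightarrow> f \<in> borel_measurable circle_measure"
proof -
  assume f: "f \<in> measurable circle_measure circle_measure"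
  have "(\<lambda>x. x) \<in> borel_measurable circle_measure"
    unfolding circle_measure_def by (rule measurable_restrict_space1) simp
  then show ?thesis using measurable_compose[OF f] by blast
qed

lemma E_meas:
  assumes Tm: "T \<in> measurable circle_measure circle_measure"
  shows "E_set T (rotation a) n r \<in> sets (circle_measure \<Otimes>\<^sub>M circle_measure)"
proof -
  have f[measurable]: "(\<lambda>z. (T ^^ i) (fst z)) \<in> borel_measurable (circle_measure \<Otimes>\<^sub>M circle_measure)" for i
    by (rule measurable_compose[OF measurable_fst cm_to_borel[OF funpow_meas[OF Tm]]])
  have g[measurable]: "(\<lambda>z. (rotation a ^^ j) (snd z)) \<in> borel_measurable (circle_measure \<Otimes>\<^sub>M circle_measure)" for j
    by (rule measurable_compose[OF measurable_snd cm_to_borel[OF funpow_meas[OF rot_meas]]])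
  have "{z \<in> space (circle_measure \<Otimes>\<^sub>M circle_measure). \<exists>i<n. \<exists>j<n.
          circ_dist ((T ^^ i) (fst z)) ((rotation a ^^ j) (snd z)) < r} \<in> sets (circle_measure \<Otimes>\<^sub>M circle_measure)"
    by measurable
  moreover have "E_set T (rotation a) n r = {z \<in> space (circle_measure \<Otimes>\<^sub>M circle_measure). \<exists>i<n. \<exists>j<n.
          circ_dist ((T ^^ i) (fst z)) ((rotation a ^^ j) (snd z)) < r}"
    unfolding E_set_def space_pair_measure space_cm by fastforce
  ultimately show ?thesis by simp
qed



theorem mainTheorem10:
  fixes T1 :: "real \<Rightarrow> real" and \<alpha> \<epsilon> c\<alpha> \<delta> c0 :: real and r :: "nat \<Rightarrow> real"
  assumes T1_mp: "measure_preserving_map circle_measure T1"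
    and T1_mix: "exp_mixing_BV_Linf T1"
    and eps_pos: "\<epsilon> > 0" and c\<alpha>_pos: "c\<alpha> > 0"
    and dioph: "\<exists>Q. \<forall>q::nat \<ge> Q. \<forall>p::int.
        \<bar>real q * \<alpha> - real_of_int p\<bar>
          \<ge> c\<alpha> * (ln (real q))\<^sup>2 * (ln (ln (real q))) powr (1 + \<epsilon>) / (real q)\<^sup>2"
    and r_dec: "decseq r" and r_pos: "\<And>n. r n > 0"
    and delta: "0 < \<delta>" "\<delta> < \<epsilon>" and c0_pos: "c0 > 0"
    and r_lower: "\<exists>N. \<forall>n::nat \<ge> N.
        r n \<ge> c0 * (ln (real n))\<^sup>2 * (ln (ln (real n))) powr (1 + \<delta>) / (real n)\<^sup>2"
  shows "(\<Union>N. \<Inter>n\<in>{N..}. E_set T1 (rotation \<alpha>) n (r n))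
           \<in> sets (circle_measure \<Otimes>\<^sub>M circle_measure)
       \<and> measure (circle_measure \<Otimes>\<^sub>M circle_measure)
           (\<Union>N. \<Inter>n\<in>{N..}. E_set T1 (rotation \<alpha>) n (r n)) = 1"
proof -
  let ?M = "circle_measure \<Otimes>\<^sub>M circle_measure"
  interpret P2: prob_space ?M by (rule prob_cm2)
  interpret PP: pair_sigma_finite circle_measure circle_measure
    unfolding pair_sigma_finite_def using prob_space_imp_sigma_finite[OF prob_cm] by simp
  have Tm: "T1 \<in> measurable circle_measure circle_measure"
    using T1_mp unfolding measure_preserving_map_def by blast
  obtain C \<theta> where C: "C > 0" and \<theta>: "\<theta> > 0" and mix: "\<forall>\<psi> \<phi> (n::nat). \<psi> \<in> borel_measurable circle_measure \<and> bounded_variation \<psi>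
            \<and> Linf circle_measure \<phi> \<longrightarrow>
          \<bar>(\<integral>x. \<psi> x * \<phi> ((T1 ^^ n) x) \<partial>circle_measure)
            - (\<integral>x. \<psi> x \<partial>circle_measure) * (\<integral>x. \<phi> x \<partial>circle_measure)\<bar>
          \<le> C * bv_norm \<psi> * Linf_norm circle_measure \<phi> * exp (- \<theta> * real n)"
    using T1_mix unfolding exp_mixing_BV_Linf_def by blast
  obtain k0 where k0: "\<And>k q p. k \<ge> k0 \<Longrightarrow> 0 < q \<Longrightarrow> q < (2::nat)^k \<Longrightarrow>
           c\<alpha> * (real k * ln 2)\<^sup>2 / 4^k \<le> \<bar>real q * \<alpha> - real_of_int p\<bar>"
    using gap[OF c\<alpha>_pos eps_pos dioph] by blast
  define c where "c = min (c0/4) (c\<alpha>/2)"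
  have c_pos: "c > 0" unfolding c_def using c0_pos c\<alpha>_pos by simp
  define s where "s k = c * (real k * ln 2)\<^sup>2 / 4^k" for k :: nat
  define K where "K = nat \<lceil>(ln 4 + 1) / \<theta>\<rceil> + 1"
  define g where "g k = K * k" for k :: nat
  define L where "L k = 2^k div g k" for k :: nat
  define E where "E k = E_set T1 (rotation \<alpha>) (2^k) (s k)" for k :: nat
  define F where "F k = space ?M - E k" for k :: nat
  define b where "b k = exp (- (real (2^k) * s k) * real (L k)) + real (L k) * (C * (1 + 4 * real ((2::nat)^k)) * exp (- \<theta> * real (g k)))" for k :: nat
  define \<beta> where "\<beta> = c * (ln 2)\<^sup>2 / real K"
  have K1: "K \<ge> 1" unfolding K_def by simp
  have \<beta>_pos: "\<beta> > 0" unfolding \<beta>_def using c_pos K1 by simp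
  have E_sets: "E k \<in> sets ?M" for k unfolding E_def by (rule E_meas[OF Tm])
  have F_sets: "F k \<in> sets ?M" for k unfolding F_def using E_sets by auto

  have s_lim: "s \<longlonglongrightarrow> 0" unfolding s_def by real_asymp
  have us_lim: "(\<lambda>k. real ((2::nat)^k) * s k) \<longlonglongrightarrow> 0" unfolding s_def by real_asymp
  obtain k1 where k1: "\<And>k. k \<ge> k1 \<Longrightarrow> s k < 1/4 \<and> real ((2::nat)^k) * s k \<le> 1"
  proof -
    have "\<forall>\<^sub>F k in sequentially. s k < 1/4" using order_tendstoD(2)[OF s_lim, of "1/4"] by simp
    moreover have "\<forall>\<^sub>F k in sequentially. real ((2::nat)^k) * s k < 1" using order_tendstoD(2)[OF us_lim, of 1] by simp
    ultimately have "\<forall>\<^sub>F k in sequentially. s k < 1/4 \<and> real ((2::nat)^k) * s k \<le> 1"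
      by eventually_elim auto
    then show ?thesis using that unfolding eventually_sequentially by blast
  qed
  define kA where "kA = max (max k0 k1) 1"

  have slice: "emeasure circle_measure {x \<in> circle. (x, y) \<notin> E k} \<le> ennreal (b k)"
    if k: "k \<ge> kA" and y: "y \<in> circle" for k y
  proof -
    have k1': "k \<ge> k1" "k \<ge> k0" "k \<ge> 1" using k unfolding kA_def by auto
    have s_pos: "0 < s k" unfolding s_def using c_pos k1'(3) by simp
    have sep: "2 * s k \<le> circ_dist ((rotation \<alpha> ^^ j) y) ((rotation \<alpha> ^^ j') y)"
      if jj: "j < 2^k" "j' < 2^k" "j \<noteq> j'" for j j'
    proof -
      obtain q p where qp: "0 < q" "q < 2^k" "circ_dist ((rotation \<alpha> ^^ j) y) ((rotation \<alpha> ^^ j') y) = \<bar>real q * \<alpha> - of_int p\<bar>"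
        using circ_rot[OF jj] by blast
      have "2 * c \<le> c\<alpha>" unfolding c_def by simp
      then have "2 * c * (real k * ln 2)\<^sup>2 / 4^k \<le> c\<alpha> * (real k * ln 2)\<^sup>2 / 4^k"
        by (intro divide_right_mono mult_right_mono) auto
      then have "2 * s k \<le> c\<alpha> * (real k * ln 2)\<^sup>2 / 4^k" unfolding s_def by simp
      then show ?thesis using k0[OF k1'(2) qp(1) qp(2), of p] qp(3) by linarith
    qed
    have Lg: "L k * g k \<le> 2^k" unfolding L_def by simp
    have "emeasure circle_measure {x \<in> circle. (x, y) \<notin> E_set T1 (rotation \<alpha>) (2^k) (s k)}
          \<le> ennreal (exp (- (real (2^k) * s k) * real (L k)) + real (L k) * (C * (1 + 4 * real ((2::nat)^k)) * exp (- \<theta> * real (g k))))"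
      by (rule slice_bound[OF Tm C mix y s_pos _ _ sep Lg]) (use k1 k1'(1) in auto)
    then show ?thesis unfolding b_def E_def .
  qed

  have FM: "emeasure ?M (F k) \<le> ennreal (b k)" if k: "k \<ge> kA" for k
  proof -
    have "emeasure ?M (F k) = (\<integral>\<^sup>+y. emeasure circle_measure ((\<lambda>x. (x, y)) -` F k) \<partial>circle_measure)"
      by (rule PP.emeasure_pair_measure_alt2[OF F_sets])
    also have "\<dots> \<le> (\<integral>\<^sup>+y. ennreal (b k) \<partial>circle_measure)"
    proof (rule nn_integral_mono)
      fix y assume "y \<in> space circle_measure"
      then have y: "y \<in> circle" by simp
      have "(\<lambda>x. (x, y)) -` F k = {x \<in> circle. (x, y) \<notin> E k}"
        unfolding F_def using y by (auto simp: space_pair_measure)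
      then show "emeasure circle_measure ((\<lambda>x. (x, y)) -` F k) \<le> ennreal (b k)" using slice[OF k y] by simp
    qed
    also have "\<dots> = ennreal (b k)" using prob_space.emeasure_space_1[OF prob_cm] by simp
    finally show ?thesis .
  qed

  have b_bound: "b k \<le> exp 1 * exp (- \<beta> * real k) + 5 * C * exp (- real k)" if k: "k \<ge> kA" for k
  proof -
    have k1': "k \<ge> k1" "k \<ge> 1" using k unfolding kA_def by auto
    define u where "u = real ((2::nat)^k)"
    have u1: "u \<ge> 1" unfolding u_def by simp
    have u2: "u\<^sup>2 = 4^k" unfolding u_def by (simp add: power2_eq_square power_mult_distrib[symmetric])
    have s0: "s k \<ge> 0" unfolding s_def using c_pos by simp
    have us1: "u * s k \<le> 1" using k1 k1'(1) unfolding u_def by auto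
    have gpos: "g k > 0" unfolding g_def using K1 k1'(2) by simp
    have Lg: "(2::nat)^k < (L k + 1) * g k"
    proof -
      have "L k * g k + 2^k mod g k = (2::nat)^k" unfolding L_def by (rule div_mult_mod_eq)
      moreover have "(2::nat)^k mod g k < g k" using gpos by simp
      moreover have "(L k + 1) * g k = L k * g k + g k" by (simp only: add_mult_distrib mult_1)
      ultimately show ?thesis by linarith
    qed
    then have "real ((2::nat)^k) < real ((L k + 1) * g k)" by (simp only: of_nat_less_iff)
    then have "u < (real (L k) + 1) * real (g k)" unfolding u_def by (simp add: algebra_simps)
    then have "u / real (g k) < real (L k) + 1" using gpos by (subst pos_divide_less_eq) auto
    then have Lb: "u / real (g k) - 1 \<le> real (L k)" by linarith
    have us2: "u\<^sup>2 * s k = c * (real k * ln 2)\<^sup>2" unfolding s_def u2 by simp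
    have gk: "real (g k) = real K * real k" unfolding g_def by simp
    have "u * s k * (u / real (g k) - 1) \<le> u * s k * real (L k)"
      using Lb u1 s0 by (intro mult_left_mono) auto
    moreover have "u * s k * (u / real (g k) - 1) = u\<^sup>2 * s k / real (g k) - u * s k"
      by (simp add: field_simps power2_eq_square)
    moreover have "u\<^sup>2 * s k / real (g k) = \<beta> * real k"
      unfolding us2 gk \<beta>_def using k1'(2) K1 by (simp add: field_simps power2_eq_square)
    ultimately have ex: "\<beta> * real k - 1 \<le> u * s k * real (L k)" using us1 by linarith
    have T1': "exp (- (u * s k) * real (L k)) \<le> exp 1 * exp (- \<beta> * real k)"
    proof -
      have "exp (- (u * s k) * real (L k)) \<le> exp (1 + - \<beta> * real k)" using ex by simp
      moreover have "exp (1 + - \<beta> * real k) = exp 1 * exp (- \<beta> * real k)" by (rule exp_add)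
      ultimately show ?thesis by linarith
    qed
    have Ku: "ln 4 + 1 \<le> \<theta> * real K"
    proof -
      have "(ln 4 + 1) / \<theta> \<le> real K" unfolding K_def by linarith
      then show ?thesis using \<theta> by (simp add: field_simps)
    qed
    have e1: "exp (- \<theta> * real (g k)) \<le> exp (- (ln 4 + 1) * real k)"
    proof -
      have "(ln 4 + 1) * real k \<le> \<theta> * real K * real k" using Ku by (intro mult_right_mono) auto
      then show ?thesis unfolding gk by (simp add: mult.assoc algebra_simps)
    qed
    have e2: "exp (- (ln 4 + 1) * real k) = exp (- real k) / u\<^sup>2"
    proof -
      have "exp (real k * ln 4) = exp (ln 4) ^ k" by (rule exp_of_nat_mult)
      then have "exp (ln 4 * real k) = 4^k" by (simp add: mult.commute)
      moreover have "exp (- (ln 4 + 1) * real k) * exp (ln 4 * real k) = exp (- real k)"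
        by (simp add: exp_add[symmetric] algebra_simps)
      ultimately show ?thesis unfolding u2 by (simp add: field_simps)
    qed
    have LL: "real (L k) \<le> u" unfolding u_def L_def by simp
    have "real (L k) * (C * (1 + 4 * u) * exp (- \<theta> * real (g k))) \<le> u * (C * (5 * u) * (exp (- real k) / u\<^sup>2))"
      using LL u1 C e1[unfolded e2] by (intro mult_mono) auto
    also have "\<dots> = 5 * C * exp (- real k)" using u1 by (simp add: field_simps power2_eq_square)
    finally show ?thesis using T1' unfolding b_def u_def by linarith
  qed

  have summ: "summable (\<lambda>k. measure ?M (F k))"
  proof (rule summable_comparison_test'[where N = kA])
    have g1: "summable (\<lambda>k. exp (- \<beta> * real k))"
    proof -
      have "(\<lambda>k. exp (- \<beta> * real k)) = (\<lambda>k. exp (- \<beta>) ^ k)"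
      proof
        fix k
        have "exp (real k * (- \<beta>)) = exp (- \<beta>) ^ k" by (rule exp_of_nat_mult)
        then show "exp (- \<beta> * real k) = exp (- \<beta>) ^ k" by (simp add: mult.commute)
      qed
      moreover have "summable (\<lambda>k. exp (- \<beta>) ^ k)" using \<beta>_pos by (intro summable_geometric) simp
      ultimately show ?thesis by simp
    qed
    have g2: "summable (\<lambda>k. exp (- real k))"
    proof -
      have "(\<lambda>k. exp (- real k)) = (\<lambda>k. exp (- 1) ^ k)"
      proof
        fix k
        have "exp (real k * (- 1)) = exp (- 1) ^ k" by (rule exp_of_nat_mult)
        then show "exp (- real k) = exp (- 1) ^ k" by simp
      qed
      moreover have "summable (\<lambda>k. exp (- 1::real) ^ k)" by (intro summable_geometric) simp
      ultimately show ?thesis by simp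
    qed
    show "summable (\<lambda>k. exp 1 * exp (- \<beta> * real k) + 5 * C * exp (- real k))"
      using g1 g2 by (intro summable_add summable_mult)
    fix k assume k: "kA \<le> k"
    have b0: "0 \<le> b k" unfolding b_def using C by (intro add_nonneg_nonneg mult_nonneg_nonneg) auto
    have "ennreal (measure ?M (F k)) \<le> ennreal (b k)"
      using FM[OF k] P2.emeasure_eq_measure[of "F k"] by simp
    then have "measure ?M (F k) \<le> b k" using b0 by (simp add: ennreal_le_iff)
    then show "norm (measure ?M (F k)) \<le> exp 1 * exp (- \<beta> * real k) + 5 * C * exp (- real k)"
      using b_bound[OF k] by simp
  qed

  have AEE: "AE z in ?M. eventually (\<lambda>k. z \<in> E k) sequentially"
  proof -
    have "AE z in ?M. eventually (\<lambda>k. z \<in> space ?M - F k) sequentially"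
    proof (rule borel_cantelli_AE1[OF F_sets _ summ])
      fix k show "emeasure ?M (F k) < \<infinity>" using P2.emeasure_finite[of "F k"] by (simp add: less_top[symmetric])
    qed
    then show ?thesis
    proof (rule eventually_mono)
      fix z assume "eventually (\<lambda>k. z \<in> space ?M - F k) sequentially"
      then show "eventually (\<lambda>k. z \<in> E k) sequentially"
        by (rule eventually_mono) (auto simp: F_def)
    qed
  qed

  obtain N where N: "\<forall>n::nat \<ge> N.
        r n \<ge> c0 * (ln (real n))\<^sup>2 * (ln (ln (real n))) powr (1 + \<delta>) / (real n)\<^sup>2"
    using r_lower by blast
  define kR where "kR = N + 27"
  have kR: "s k \<le> r n" if k: "k \<ge> kR" and n: "2^k \<le> n" "n < 2^(k+1)" for k n
  proof -
    define Mx :: nat where "Mx = 2^(k+1)"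
    have "k + 1 < Mx" unfolding Mx_def by (rule less_exp)
    then have MN: "Mx \<ge> N" and M27: "27 \<le> real Mx" using k unfolding kR_def by auto
    have rM: "r Mx \<le> r n" using r_dec n(2) unfolding Mx_def by (simp add: decseqD)
    have lb: "1 \<le> (ln (ln (real Mx))) powr (1 + \<delta>)"
      using ln_big(2)[OF M27] delta by (intro ge_one_powr_ge_zero) auto
    have "c0 * (ln (real Mx))\<^sup>2 * 1 / (real Mx)\<^sup>2 \<le> c0 * (ln (real Mx))\<^sup>2 * (ln (ln (real Mx))) powr (1 + \<delta>) / (real Mx)\<^sup>2"
      using c0_pos lb by (intro divide_right_mono mult_left_mono) auto
    also have "\<dots> \<le> r Mx" using N MN by auto
    finally have r1: "c0 * (ln (real Mx))\<^sup>2 / (real Mx)\<^sup>2 \<le> r Mx" by simp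
    have Mr: "real Mx = (2::real)^(k+1)" unfolding Mx_def by simp
    have "ln ((2::real)^(k+1)) = real (k+1) * ln 2" by (rule ln_realpow)
    then have lnM: "ln (real Mx) = (real k + 1) * ln 2" unfolding Mr by simp
    have M2: "(real Mx)\<^sup>2 = 4 * 4^k" unfolding Mx_def by (simp add: power2_eq_square power_mult_distrib[symmetric])
    have "c \<le> c0 / 4" unfolding c_def by simp
    then have "s k \<le> c0 / 4 * (real k * ln 2)\<^sup>2 / 4^k" unfolding s_def
      by (intro divide_right_mono mult_right_mono) auto
    also have "\<dots> = c0 * (real k * ln 2)\<^sup>2 / (4 * 4^k)" by simp
    also have "\<dots> \<le> c0 * ((real k + 1) * ln 2)\<^sup>2 / (4 * 4^k)"
      using c0_pos by (intro divide_right_mono mult_left_mono power_mono mult_right_mono) auto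
    also have "\<dots> = c0 * (ln (real Mx))\<^sup>2 / (real Mx)\<^sup>2" unfolding lnM M2 ..
    finally show ?thesis using r1 rM by linarith
  qed

  define G where "G = (\<Union>N. \<Inter>n\<in>{N..}. E_set T1 (rotation \<alpha>) n (r n))"
  have G_sets: "G \<in> sets ?M"
    unfolding G_def using E_meas[OF Tm]
    by (intro sets.countable_UN sets.countable_INT') auto
  have "AE z in ?M. z \<in> G"
  proof (rule eventually_mono[OF AEE])
    fix z assume "eventually (\<lambda>k. z \<in> E k) sequentially"
    then obtain k3 where k3: "\<And>k. k \<ge> k3 \<Longrightarrow> z \<in> E k" unfolding eventually_sequentially by blast
    define kk where "kk = max k3 kR"
    have "z \<in> (\<Inter>n\<in>{2^kk..}. E_set T1 (rotation \<alpha>) n (r n))"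
    proof
      fix n assume "n \<in> {(2::nat)^kk..}"
      then have n: "2^kk \<le> n" by simp
      have "(1::nat) \<le> 2^kk" by simp
      then have n1: "n \<ge> 1" using n by linarith
      obtain k where kn: "2^k \<le> n" "n < 2^(k+1)" using ex_power_ivl1[of 2 n] n1 by auto
      have "(2::nat)^kk < 2^(k+1)" using n kn(2) by linarith
      then have "kk < k + 1" using power_less_imp_less_exp[of "2::nat" kk "k+1"] by simp
      then have kge: "k \<ge> k3" "k \<ge> kR" unfolding kk_def by auto
      have zE: "z \<in> E k" by (rule k3[OF kge(1)])
      have sr: "s k \<le> r n" by (rule kR[OF kge(2) kn])
      obtain x y where z: "z = (x, y)" by (cases z)
      from zE obtain i j where ij: "x \<in> circle" "y \<in> circle" "i < 2^k" "j < 2^k"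
          "circ_dist ((T1 ^^ i) x) ((rotation \<alpha> ^^ j) y) < s k"
        unfolding E_def E_set_def z by blast
      have "i < n" "j < n" using ij(3,4) kn(1) by linarith+
      moreover have "circ_dist ((T1 ^^ i) x) ((rotation \<alpha> ^^ j) y) < r n" using ij(5) sr by linarith
      ultimately show "z \<in> E_set T1 (rotation \<alpha>) n (r n)"
        unfolding E_set_def z using ij(1,2) by blast
    qed
    then show "z \<in> G" unfolding G_def by blast
  qed
  then have "measure ?M G = 1" using P2.prob_eq_1[OF G_sets] by simp
  then show ?thesis using G_sets unfolding G_def by simp
qed


end
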